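(* Let $x=\{x_n\}_{n=1}^\infty$ be a complex sequence with $x_n\neq0$ for all $n$ and $\sum_{k=1}^\infty|x_kx_{k+1}|<\infty$. Then $F_n:=\mathfrak{F}\big(\{x_k\}_{k=n}^\infty\big)$, $n\in\mathbb{N}$, is the unique solution of the second order difference equation \[ F_n-F_{n+1}+x_nx_{n+1}F_{n+2}=0,\quad n\in\mathbb{N}, \] satisfying $\lim_{n\to\infty}F_n=1$.
   Context: For a complex sequence $x=\{x_k\}_{k=N}^{\infty}$ with $\sum_{k\ge N}|x_kx_{k+1}|<\infty$, define \[ \mathfrak{F}(x)=1+\sum_{m=1}^\infty(-1)^m\sum_{k_1=N}^\infty\ \sum_{k_2=k_1+2}^\infty\cdots\sum_{k_m=k_{m-1}+2}^\infty x_{k_1}x_{k_1+1}x_{k_2}x_{k_2+1}\cdots x_{k_m}x_{k_m+1}. \] *)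

theory Defs
  imports "HOL-Analysis.Analysis"
begin

definition adm_idx :: "nat \<Rightarrow> nat \<Rightarrow> nat list set" where
  "adm_idx N m = {ks. length ks = m \<and> (\<forall>k\<in>set ks. N \<le> k) \<and>
                      sorted_wrt (\<lambda>a b. a + 2 \<le> b) ks}"

definition pair_prod :: "(nat \<Rightarrow> complex) \<Rightarrow> nat list \<Rightarrow> complex" where
  "pair_prod x ks = prod_list (map (\<lambda>k. x k * x (Suc k)) ks)"

definition frakF :: "(nat \<Rightarrow> complex) \<Rightarrow> nat \<Rightarrow> complex" where
  "frakF x N = 1 + (\<Sum>m. (-1) ^ Suc m * infsum (pair_prod x) (adm_idx N (Suc m)))"

end

theory Submission imports Defs begin

lemma adm0: "adm_idx N 0 = {[]}"
  by (auto simp: adm_idx_def)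

lemma adm_Suc: "adm_idx N (Suc m) = Cons N ` adm_idx (N+2) m \<union> adm_idx (Suc N) (Suc m)"
proof (rule set_eqI)
  fix ks show "ks \<in> adm_idx N (Suc m) \<longleftrightarrow> ks \<in> Cons N ` adm_idx (N+2) m \<union> adm_idx (Suc N) (Suc m)"
  proof (cases ks)
    case Nil then show ?thesis by (auto simp: adm_idx_def)
  next
    case (Cons k ks')
    show ?thesis
    proof (cases "k = N")
      case True then show ?thesis using Cons by (auto simp: adm_idx_def)
    next
      case False then show ?thesis using Cons by (fastforce simp: adm_idx_def)
    qed
  qed
qed

lemma adm_disj: "Cons N ` adm_idx (N+2) m \<inter> adm_idx (Suc N) (Suc m) = {}"
  by (auto simp: adm_idx_def)

lemma pp_Cons: "pair_prod x (k # ks) = x k * x (Suc k) * pair_prod x ks"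
  by (simp add: pair_prod_def)

lemma pp_Nil: "pair_prod x [] = 1"
  by (simp add: pair_prod_def)

lemma bern: fixes b T :: real assumes "b \<ge> 0" "T \<ge> 0"
  shows "T^(Suc m) + real (Suc m) * b * T^m \<le> (b+T)^(Suc m)"
proof (induction m)
  case 0 then show ?case by simp
next
  case (Suc m)
  have "T^(Suc (Suc m)) + real (Suc (Suc m)) * b * T^(Suc m)
      \<le> (b+T) * (T^(Suc m) + real (Suc m) * b * T^m)"
    using assms by (simp add: algebra_simps)
  also have "\<dots> \<le> (b+T) * (b+T)^(Suc m)"
    using Suc assms by (intro mult_left_mono) auto
  finally show ?case by simp
qed

lemma arith_step: fixes b T T' :: real assumes "b \<ge> 0" "T \<ge> 0" "T' \<ge> 0" "T' \<le> T"
  shows "b * (T'^m / fact m) + T^(Suc m) / fact (Suc m) \<le> (b+T)^(Suc m) / fact (Suc m)"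
proof -
  have "b * T'^m \<le> b * T^m" using assms by (intro mult_left_mono power_mono) auto
  hence "real (Suc m) * (b * T'^m) + T^(Suc m) \<le> (b+T)^(Suc m)"
    using bern[OF assms(1,2), of m] by (smt (verit) mult_left_mono of_nat_0_le_iff mult.assoc)
  moreover have "b * (T'^m / fact m) + T^(Suc m) / fact (Suc m) = (real (Suc m) * (b * T'^m) + T^(Suc m)) / fact (Suc m)"
  proof -
    have fs: "fact (Suc m) = real (Suc m) * (fact m :: real)" by simp
    have "(fact m :: real) > 0" by simp
    have g: "\<And>F s A B::real. F > 0 \<Longrightarrow> s > 0 \<Longrightarrow> b * (A / F) + B / (s * F) = (s * (b * A) + B) / (s * F)"
      by (simp add: field_simps)
    show ?thesis unfolding fs by (rule g) (use \<open>fact m > 0\<close> in auto)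
  qed
  ultimately show ?thesis by (simp add: divide_right_mono)
qed

definition bb :: "(nat \<Rightarrow> complex) \<Rightarrow> nat \<Rightarrow> real" where
  "bb x k = norm (x k * x (Suc k))"
definition TT :: "(nat \<Rightarrow> complex) \<Rightarrow> nat \<Rightarrow> real" where
  "TT x N = (\<Sum>k. bb x (k + N))"

lemma bb_nonneg: "bb x k \<ge> 0" by (simp add: bb_def)

lemma TT_Suc: assumes "summable (bb x)" shows "TT x N = bb x N + TT x (Suc N)"
proof -
  have s: "summable (\<lambda>k. bb x (k + N))" using assms summable_ignore_initial_segment by blast
  show ?thesis using suminf_split_head[OF s] by (simp add: TT_def)
qed

lemma TT_nonneg: assumes "summable (bb x)" shows "TT x N \<ge> 0"
  unfolding TT_def by (rule suminf_nonneg) (use assms summable_ignore_initial_segment bb_nonneg in auto)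

lemma TT_le_Suc: assumes "summable (bb x)" shows "TT x (Suc N) \<le> TT x N"
  using TT_Suc[OF assms, of N] bb_nonneg[of x N] by simp

lemma TT_mono: assumes "summable (bb x)" "N \<le> M" shows "TT x M \<le> TT x N"
  using assms(2)
proof (induction M)
  case 0 then show ?case by simp
next
  case (Suc M)
  then show ?case using TT_le_Suc[OF assms(1), of M] by (cases "N = Suc M") auto
qed

lemma TT_lim: assumes "summable (bb x)" shows "TT x \<longlonglongrightarrow> 0"
proof -
  have "TT x = (\<lambda>N. suminf (bb x) - (\<Sum>i<N. bb x i))"
    by (rule ext) (simp add: TT_def suminf_minus_initial_segment[OF assms])
  moreover have "(\<lambda>N. suminf (bb x) - (\<Sum>i<N. bb x i)) \<longlonglongrightarrow> suminf (bb x) - suminf (bb x)"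
    by (intro tendsto_intros summable_LIMSEQ assms)
  ultimately show ?thesis by simp
qed

lemma fin_bound:
  assumes "summable (bb x)"
  shows "finite F \<Longrightarrow> F \<subseteq> adm_idx N m \<Longrightarrow> (\<Sum>ks\<in>F. norm (pair_prod x ks)) \<le> TT x N ^ m / fact m"
proof (induction m arbitrary: N F)
  case 0
  then have "F \<subseteq> {[]}" by (simp add: adm0)
  then have "F = {} \<or> F = {[]}" by blast
  then show ?case by (auto simp: pp_Nil)
next
  case (Suc m)
  note IHm = Suc.IH
  obtain M where M: "\<forall>k\<in>(\<Union>ks\<in>F. set ks). k < M"
    using Suc.prems(1) finite_nat_bounded[of "\<Union>ks\<in>F. set ks"] by auto
  have main: "\<And>N F. M \<le> N + d \<Longrightarrow> finite F \<Longrightarrow> F \<subseteq> adm_idx N (Suc m) \<Longrightarrow> (\<forall>ks\<in>F. \<forall>k\<in>set ks. k < M)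
     \<Longrightarrow> (\<Sum>ks\<in>F. norm (pair_prod x ks)) \<le> TT x N ^ Suc m / fact (Suc m)" for d
  proof (induction d)
    case 0
    have "F = {}"
    proof (rule ccontr)
      assume "F \<noteq> {}" then obtain ks where ks: "ks \<in> F" by blast
      then have "ks \<in> adm_idx N (Suc m)" using 0 by blast
      then obtain k ks' where "ks = k # ks'" "k \<ge> N" by (cases ks) (auto simp: adm_idx_def)
      then show False using 0 ks by (metis add_0_right leD list.set_intros(1) order.trans)
    qed
    then show ?case using TT_nonneg[OF assms] by simp
  next
    case (Suc d)
    define F1 where "F1 = F \<inter> Cons N ` adm_idx (N+2) m"
    define F2 where "F2 = F \<inter> adm_idx (Suc N) (Suc m)"
    have FU: "F = F1 \<union> F2" using Suc.prems(3) adm_Suc[of N m] unfolding F1_def F2_def by blast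
    have FD: "F1 \<inter> F2 = {}" using adm_disj[of N m] unfolding F1_def F2_def by blast
    have fin1: "finite F1" "finite F2" using Suc.prems(2) unfolding F1_def F2_def by auto
    define G where "G = tl ` F1"
    have F1G: "F1 = Cons N ` G"
    proof (rule set_eqI, rule iffI)
      fix ks assume ks: "ks \<in> F1"
      then obtain ys where "ks = N # ys" unfolding F1_def by blast
      then have "ks = N # tl ks" by simp
      then show "ks \<in> Cons N ` G" using ks unfolding G_def by (metis image_eqI)
    next
      fix ks assume "ks \<in> Cons N ` G"
      then obtain ys where ys: "ys \<in> F1" "ks = N # tl ys" unfolding G_def by blast
      moreover from ys(1) obtain zs where "ys = N # zs" unfolding F1_def by blast
      ultimately show "ks \<in> F1" by simp
    qed
    have G_sub: "G \<subseteq> adm_idx (N+2) m"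
    proof
      fix g assume "g \<in> G"
      then obtain ys where ys: "ys \<in> F1" "g = tl ys" unfolding G_def by blast
      from ys(1) obtain zs where "ys = N # zs" "zs \<in> adm_idx (N+2) m" unfolding F1_def by blast
      with ys(2) show "g \<in> adm_idx (N+2) m" by simp
    qed
    have finG: "finite G" unfolding G_def using fin1 by simp
    have "(\<Sum>ks\<in>F1. norm (pair_prod x ks)) = (\<Sum>ks\<in>G. norm (pair_prod x (N # ks)))"
      unfolding F1G by (subst sum.reindex) (auto simp: inj_on_def)
    also have "\<dots> = bb x N * (\<Sum>ks\<in>G. norm (pair_prod x ks))"
      by (simp add: pp_Cons bb_def norm_mult sum_distrib_left mult.assoc)
    also have "\<dots> \<le> bb x N * (TT x (N+2) ^ m / fact m)"
      by (rule mult_left_mono[OF IHm[OF finG G_sub] bb_nonneg])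
    finally have s1: "(\<Sum>ks\<in>F1. norm (pair_prod x ks)) \<le> bb x N * (TT x (N+2) ^ m / fact m)" .
    have s2: "(\<Sum>ks\<in>F2. norm (pair_prod x ks)) \<le> TT x (Suc N) ^ Suc m / fact (Suc m)"
      using Suc.prems fin1 unfolding F2_def by (intro Suc.IH) auto
    have "(\<Sum>ks\<in>F. norm (pair_prod x ks)) = (\<Sum>ks\<in>F1. norm (pair_prod x ks)) + (\<Sum>ks\<in>F2. norm (pair_prod x ks))"
      unfolding FU using fin1 FD by (simp add: sum.union_disjoint)
    also have "\<dots> \<le> bb x N * (TT x (N+2) ^ m / fact m) + TT x (Suc N) ^ Suc m / fact (Suc m)"
      using s1 s2 by simp
    also have "\<dots> \<le> (bb x N + TT x (Suc N)) ^ Suc m / fact (Suc m)"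
      by (rule arith_step) (simp_all add: bb_nonneg TT_nonneg[OF assms] TT_le_Suc[OF assms] TT_mono[OF assms])
    also have "\<dots> = TT x N ^ Suc m / fact (Suc m)" using TT_Suc[OF assms, of N] by simp
    finally show ?case .
  qed
  show ?case by (rule main[of N M F]) (use Suc.prems M in auto)
qed

lemma pp_abs_summable: assumes "summable (bb x)"
  shows "(\<lambda>ks. norm (pair_prod x ks)) summable_on adm_idx N m"
proof (rule nonneg_bdd_above_summable_on)
  show "bdd_above (sum (\<lambda>ks. norm (pair_prod x ks)) ` {F. F \<subseteq> adm_idx N m \<and> finite F})"
    by (rule bdd_aboveI[where M="TT x N ^ m / fact m"]) (use fin_bound[OF assms] in blast)
qed simp

lemma pp_summable: assumes "summable (bb x)"
  shows "pair_prod x summable_on adm_idx N m"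
  by (rule abs_summable_summable) (use pp_abs_summable[OF assms] in simp)

lemma norm_e: assumes "summable (bb x)"
  shows "norm (infsum (pair_prod x) (adm_idx N m)) \<le> TT x N ^ m / fact m"
proof -
  have "norm (infsum (pair_prod x) (adm_idx N m)) \<le> infsum (\<lambda>ks. norm (pair_prod x ks)) (adm_idx N m)"
    by (rule norm_infsum_bound) (use pp_abs_summable[OF assms] in simp)
  also have "\<dots> \<le> TT x N ^ m / fact m"
    by (rule infsum_le_finite_sums[OF pp_abs_summable[OF assms]], rule fin_bound[OF assms])
  finally show ?thesis .
qed

lemma e0: "infsum (pair_prod x) (adm_idx N 0) = 1"
  by (simp add: adm0 pp_Nil)

lemma e_rec: assumes "summable (bb x)"
  shows "infsum (pair_prod x) (adm_idx N (Suc m)) =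
     x N * x (Suc N) * infsum (pair_prod x) (adm_idx (N+2) m) + infsum (pair_prod x) (adm_idx (Suc N) (Suc m))"
proof -
  have s1: "pair_prod x summable_on Cons N ` adm_idx (N+2) m"
    by (rule summable_on_subset_banach[OF pp_summable[OF assms, of N "Suc m"]]) (subst adm_Suc[of N m], blast)
  have "infsum (pair_prod x) (adm_idx N (Suc m)) = infsum (pair_prod x) (Cons N ` adm_idx (N+2) m) + infsum (pair_prod x) (adm_idx (Suc N) (Suc m))"
    unfolding adm_Suc[of N m] by (rule infsum_Un_disjoint[OF s1 pp_summable[OF assms] adm_disj])
  also have "infsum (pair_prod x) (Cons N ` adm_idx (N+2) m) = infsum (\<lambda>ks. x N * x (Suc N) * pair_prod x ks) (adm_idx (N+2) m)"
    by (subst infsum_reindex) (simp_all add: inj_on_def o_def pp_Cons)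
  also have "\<dots> = x N * x (Suc N) * infsum (pair_prod x) (adm_idx (N+2) m)"
    by (rule infsum_cmult_right') 
  finally show ?thesis .
qed

definition ee :: "(nat \<Rightarrow> complex) \<Rightarrow> nat \<Rightarrow> nat \<Rightarrow> complex" where
  "ee x m N = infsum (pair_prod x) (adm_idx N m)"
definition cc :: "(nat \<Rightarrow> complex) \<Rightarrow> nat \<Rightarrow> nat \<Rightarrow> complex" where
  "cc x N m = (-1)^m * ee x m N"

lemma cc_norm: assumes "summable (bb x)" shows "norm (cc x N m) \<le> TT x N ^ m / fact m"
  using norm_e[OF assms, of N m] by (simp add: cc_def ee_def norm_mult norm_power)

lemma cc_summ: assumes "summable (bb x)" shows "summable (cc x N)"
proof (rule summable_comparison_test')
  show "summable (\<lambda>m. inverse (fact m) * TT x N ^ m)" by (rule summable_exp)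
  show "norm (cc x N m) \<le> inverse (fact m) * TT x N ^ m" for m
    using cc_norm[OF assms, of N m] by (simp add: field_simps)
qed

lemma cc_summ_Suc: assumes "summable (bb x)" shows "summable (\<lambda>m. cc x N (Suc m))"
  using cc_summ[OF assms] summable_Suc_iff by blast

lemma frakF_eq1: "frakF x N = 1 + (\<Sum>m. cc x N (Suc m))"
  by (simp add: frakF_def cc_def ee_def)

lemma cc_rec: assumes "summable (bb x)"
  shows "cc x N (Suc m) = cc x (Suc N) (Suc m) - x N * x (Suc N) * cc x (N+2) m"
  using e_rec[OF assms, of N m] by (simp add: cc_def ee_def algebra_simps)

lemma cc0: "cc x N 0 = 1" by (simp add: cc_def ee_def e0)

lemma frakF_eq2: assumes "summable (bb x)" shows "frakF x N = suminf (cc x N)"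
  unfolding frakF_eq1 using suminf_split_head[OF cc_summ[OF assms, of N]] cc0[of x N] by simp

lemma frakF_rec: assumes "summable (bb x)"
  shows "frakF x N - frakF x (Suc N) + x N * x (Suc N) * frakF x (Suc (Suc N)) = 0"
proof -
  have "(\<Sum>m. cc x N (Suc m)) = (\<Sum>m. cc x (Suc N) (Suc m) - x N * x (Suc N) * cc x (N+2) m)"
    by (rule arg_cong[where f=suminf], rule ext, rule cc_rec[OF assms])
  also have "\<dots> = (\<Sum>m. cc x (Suc N) (Suc m)) - (\<Sum>m. x N * x (Suc N) * cc x (N+2) m)"
    by (rule suminf_diff[symmetric]) (intro cc_summ_Suc summable_mult cc_summ assms)+
  also have "(\<Sum>m. x N * x (Suc N) * cc x (N+2) m) = x N * x (Suc N) * frakF x (N+2)"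
    by (simp add: suminf_mult cc_summ[OF assms] frakF_eq2[OF assms])
  finally show ?thesis unfolding frakF_eq1[of x N] frakF_eq1[of x "Suc N"] by (simp add: algebra_simps)
qed

lemma frakF_lim: assumes "summable (bb x)" shows "(\<lambda>N. frakF x N) \<longlonglongrightarrow> 1"
proof -
  define K where "K = (\<Sum>m. inverse (fact m) * TT x 0 ^ m)"
  have sK: "summable (\<lambda>m. inverse (fact m) * TT x 0 ^ m)" by (rule summable_exp)
  have bnd: "norm (frakF x N - 1) \<le> TT x N * K" for N
  proof -
    have g: "norm (cc x N (Suc m)) \<le> TT x N * (inverse (fact m) * TT x 0 ^ m)" for m
    proof -
      have "norm (cc x N (Suc m)) \<le> TT x N ^ Suc m / fact (Suc m)" by (rule cc_norm[OF assms])
      also have "\<dots> \<le> TT x N * (TT x N ^ m / fact m)"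
      proof -
        have "TT x N ^ Suc m / fact (Suc m) = TT x N * (TT x N ^ m / fact m) / real (Suc m)"
        proof -
          have h: "\<And>t s F::real. t^(Suc m)/(s*F) = t*(t^m/F)/s"
            by (simp add: divide_divide_eq_left ac_simps)
          show ?thesis using h[of "TT x N" "real (Suc m)" "fact m"] by (simp del: fact_Suc add: fact_Suc[of m])
        qed
        also have "\<dots> \<le> TT x N * (TT x N ^ m / fact m)"
        proof -
          have y: "0 \<le> TT x N * (TT x N ^ m / fact m)" using TT_nonneg[OF assms] by simp
          have h2: "\<And>y::real. 0 \<le> y \<Longrightarrow> y / real (Suc m) \<le> y"
            by (simp add: divide_le_eq algebra_simps)
          show ?thesis by (rule h2[OF y])
        qed
        finally show ?thesis .
      qed
      also have "\<dots> \<le> TT x N * (inverse (fact m) * TT x 0 ^ m)"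
        by (intro mult_left_mono) (auto simp: field_simps TT_nonneg[OF assms] TT_mono[OF assms] intro!: power_mono divide_right_mono)
      finally show ?thesis .
    qed
    have sg: "summable (\<lambda>m. TT x N * (inverse (fact m) * TT x 0 ^ m))" by (intro summable_mult sK)
    have sn: "summable (\<lambda>m. norm (cc x N (Suc m)))"
      by (rule summable_norm_comparison_test[OF _ sg]) (use g in auto)
    have "norm (frakF x N - 1) = norm (\<Sum>m. cc x N (Suc m))" by (simp add: frakF_eq1)
    also have "\<dots> \<le> (\<Sum>m. norm (cc x N (Suc m)))"
      by (rule summable_norm[OF sn])
    also have "\<dots> \<le> (\<Sum>m. TT x N * (inverse (fact m) * TT x 0 ^ m))"
      by (rule suminf_le[OF g _ sg]) (rule sn)
    also have "\<dots> = TT x N * K" unfolding K_def by (rule suminf_mult[OF sK])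
    finally show ?thesis .
  qed
  have "(\<lambda>N. frakF x N - 1) \<longlonglongrightarrow> 0"
  proof (rule Lim_null_comparison)
    show "\<forall>\<^sub>F N in sequentially. norm (frakF x N - 1) \<le> TT x N * K" using bnd by simp
    show "(\<lambda>N. TT x N * K) \<longlonglongrightarrow> 0" using tendsto_mult[OF TT_lim[OF assms] tendsto_const[of K]] by simp
  qed
  then have "(\<lambda>N. frakF x N - 1 + 1) \<longlonglongrightarrow> 0 + 1" by (intro tendsto_intros)
  then show ?thesis by simp
qed

lemma uniq:
  fixes F G :: "nat \<Rightarrow> complex" and a :: "nat \<Rightarrow> complex"
  assumes Frec: "\<And>n. n \<ge> 1 \<Longrightarrow> F n - F (Suc n) + a n * F (Suc (Suc n)) = 0"
    and Grec: "\<And>n. n \<ge> 1 \<Longrightarrow> G n - G (Suc n) + a n * G (Suc (Suc n)) = 0"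
    and Flim: "F \<longlonglongrightarrow> 1" and Glim: "G \<longlonglongrightarrow> 1" and alim: "a \<longlonglongrightarrow> 0"
  shows "\<And>n. n \<ge> 1 \<Longrightarrow> G n = F n"
proof -
  define D where "D n = G n - F n" for n
  have Drec: "D n = D (Suc n) - a n * D (Suc (Suc n))" if "n \<ge> 1" for n
    using Frec[OF that] Grec[OF that] unfolding D_def by (simp add: algebra_simps)
  have Frec': "F n = F (Suc n) - a n * F (Suc (Suc n))" if "n \<ge> 1" for n
    using Frec[OF that] by (simp add: algebra_simps)
  have Dlim: "D \<longlonglongrightarrow> 0" using tendsto_diff[OF Glim Flim] unfolding D_def[abs_def] by simp
  define W where "W n = F n * D (Suc n) - F (Suc n) * D n" for n
  have Wrec: "W n = a n * W (Suc n)" if "n \<ge> 1" for n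
  proof -
    have "W n = (F (Suc n) - a n * F (Suc (Suc n))) * D (Suc n) - F (Suc n) * (D (Suc n) - a n * D (Suc (Suc n)))"
      unfolding W_def using Frec'[OF that] Drec[OF that] by simp
    then show ?thesis unfolding W_def by (simp add: algebra_simps)
  qed
  have Wlim: "W \<longlonglongrightarrow> 0"
  proof -
    have "(\<lambda>n. F n * D (Suc n) - F (Suc n) * D n) \<longlonglongrightarrow> 1 * 0 - 1 * 0"
      by (intro tendsto_intros Flim Dlim filterlim_compose[OF Flim filterlim_Suc] filterlim_compose[OF Dlim filterlim_Suc])
    then show ?thesis unfolding W_def[abs_def] by simp
  qed
  obtain K1 where K1: "\<And>n. n \<ge> K1 \<Longrightarrow> norm (a n) \<le> 1"
  proof -
    from alim obtain no where "\<forall>n\<ge>no. dist (a n) 0 < 1" unfolding LIMSEQ_def using zero_less_one by blast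
    then have "\<And>n. no \<le> n \<Longrightarrow> norm (a n) \<le> 1" by (simp add: less_imp_le)
    then show ?thesis by (rule that)
  qed
  define K where "K = max K1 1"
  have Wle: "norm (W n) \<le> norm (W (j + n))" if "n \<ge> K" for n j
  proof (induction j)
    case 0 then show ?case by simp
  next
    case (Suc j)
    have "j + n \<ge> 1" "j + n \<ge> K1" using that unfolding K_def by auto
    then have "norm (W (j + n)) = norm (a (j + n)) * norm (W (Suc j + n))"
      using Wrec[OF \<open>j + n \<ge> 1\<close>] by (simp add: norm_mult)
    also have "\<dots> \<le> norm (W (Suc j + n))"
      using K1[OF \<open>j + n \<ge> K1\<close>] by (simp add: mult_left_le_one_le)
    finally show ?case using Suc by simp
  qed
  have W0: "W n = 0" if "n \<ge> K" for n
  proof -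
    have "(\<lambda>j. norm (W (j + n))) \<longlonglongrightarrow> 0"
      using tendsto_norm[OF LIMSEQ_ignore_initial_segment[OF Wlim, of n]] by simp
    then have "norm (W n) \<le> 0" by (rule LIMSEQ_le_const) (use Wle[OF that] in auto)
    then show ?thesis by simp
  qed
  obtain K2 where K2: "\<And>n. n \<ge> K2 \<Longrightarrow> dist (F n) 1 < 1"
    using Flim unfolding LIMSEQ_def using zero_less_one by blast
  have Fnz: "F n \<noteq> 0" if "n \<ge> K2" for n using K2[OF that] by auto
  define L where "L = max K K2"
  define r where "r n = D n / F n" for n
  have rconst: "r (j + L) = r L" for j
  proof (induction j)
    case 0 then show ?case by simp
  next
    case (Suc j)
    have ge: "j + L \<ge> K" "j + L \<ge> K2" "Suc j + L \<ge> K2" unfolding L_def by auto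
    have "F (j + L) * D (Suc (j + L)) = F (Suc (j + L)) * D (j + L)"
      using W0[OF ge(1)] unfolding W_def by simp
    then have "r (Suc j + L) = r (j + L)"
      unfolding r_def using Fnz[OF ge(2)] Fnz[OF ge(3)] by (simp add: field_simps)
    then show ?case using Suc by simp
  qed
  have "(\<lambda>j. r (j + L)) \<longlonglongrightarrow> 0 / 1"
    unfolding r_def by (rule tendsto_divide[OF LIMSEQ_ignore_initial_segment[OF Dlim, of L] LIMSEQ_ignore_initial_segment[OF Flim, of L]]) simp
  then have "r L = 0" unfolding rconst by (simp add: LIMSEQ_const_iff)
  then have Dtail: "D n = 0" if "n \<ge> L" for n
  proof -
    define j where "j = n - L"
    have "n = j + L" using that unfolding j_def by simp
    then have "r n = 0" using rconst \<open>r L = 0\<close> by simp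
    then show ?thesis unfolding r_def using Fnz[of n] that unfolding L_def by auto
  qed
  have bkw: "\<forall>n\<ge>1. L \<le> n + d \<longrightarrow> D n = 0" for d
  proof (induction d)
    case 0 then show ?case using Dtail by simp
  next
    case (Suc d)
    show ?case
    proof (intro allI impI)
      fix n assume n: "n \<ge> 1" "L \<le> n + Suc d"
      have "D (Suc n) = 0" "D (Suc (Suc n)) = 0" using Suc n by auto
      then show "D n = 0" using Drec[OF n(1)] by simp
    qed
  qed
  fix n :: nat assume "n \<ge> 1"
  then have "D n = 0" using bkw[of L] by simp
  then show "G n = F n" unfolding D_def by simp
qed

theorem mainTheorem2:
  fixes x :: "nat \<Rightarrow> complex"
  assumes nz: "\<And>n. n \<ge> 1 \<Longrightarrow> x n \<noteq> 0"
    and summ: "summable (\<lambda>k. norm (x (Suc k) * x (Suc (Suc k))))"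
  shows "(\<forall>n\<ge>1. frakF x n - frakF x (Suc n) + x n * x (Suc n) * frakF x (Suc (Suc n)) = 0)
       \<and> (\<lambda>n. frakF x n) \<longlonglongrightarrow> 1
       \<and> (\<forall>G :: nat \<Rightarrow> complex.
             (\<forall>n\<ge>1. G n - G (Suc n) + x n * x (Suc n) * G (Suc (Suc n)) = 0)
             \<and> G \<longlonglongrightarrow> 1
             \<longrightarrow> (\<forall>n\<ge>1. G n = frakF x n))"
proof -
  have sb: "summable (bb x)"
    using summ summable_Suc_iff[of "bb x"] unfolding bb_def by simp
  have alim: "(\<lambda>n. x n * x (Suc n)) \<longlonglongrightarrow> 0"
    using summable_LIMSEQ_zero[OF sb] unfolding bb_def by (simp add: tendsto_norm_zero_iff)
  show ?thesis
  proof (intro conjI allI impI)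
    show "frakF x n - frakF x (Suc n) + x n * x (Suc n) * frakF x (Suc (Suc n)) = 0" for n
      by (rule frakF_rec[OF sb])
    show "(\<lambda>n. frakF x n) \<longlonglongrightarrow> 1" by (rule frakF_lim[OF sb])
    fix G :: "nat \<Rightarrow> complex" and n :: nat
    assume G: "(\<forall>n\<ge>1. G n - G (Suc n) + x n * x (Suc n) * G (Suc (Suc n)) = 0) \<and> G \<longlonglongrightarrow> 1"
      and n: "1 \<le> n"
    show "G n = frakF x n"
      by (rule uniq[where a="\<lambda>n. x n * x (Suc n)", OF frakF_rec[OF sb] _ frakF_lim[OF sb] _ alim n])
         (use G in auto)
  qed
qed

end
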